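(* Let $T>0$, let $\pi:[0,T]\to\mathbb R$ be continuous and piecewise $C^1$ with $\pi(0)=0$, and let $\eta(t)=(t,\pi(t))$. Then there exists $n\in\mathbb N$ such that $\mathcal P_{\alpha_n}\cdots\mathcal P_{\alpha_1}\mathcal P_{\alpha_0}\eta(t)\in\bar C_{\mathrm{aff}}$ for all $t\in[0,T]$.
   Context: $\alpha_0=(0,-2)$, $\alpha_1=(0,2)$, $\tilde\alpha_0(t,x)=t-x$, $\tilde\alpha_1(t,x)=x$; for $k\in\mathbb N$ indices are taken modulo 2. For continuous $\eta:[0,T]\to\mathbb R^2$ with $\eta(0)=0$, $\mathcal P_{\alpha_i}\eta(t)=\eta(t)-\inf_{0\le s\le t}\tilde\alpha_i(\eta(s))\alpha_i$. $\bar C_{\mathrm{aff}}=\{(t,x)\in\mathbb R^2:0\le x\le t\}$. *)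

theory Defs
  imports "HOL-Analysis.Analysis"
begin

definition alpha :: "nat \<Rightarrow> real \<times> real" where
  "alpha k = (if even k then (0, -2) else (0, 2))"

definition alpha_tilde :: "nat \<Rightarrow> real \<times> real \<Rightarrow> real" where
  "alpha_tilde k p = (if even k then fst p - snd p else snd p)"

definition P_op :: "nat \<Rightarrow> (real \<Rightarrow> real \<times> real) \<Rightarrow> (real \<Rightarrow> real \<times> real)" where
  "P_op k \<eta> = (\<lambda>t. \<eta> t - (INF s\<in>{0..t}. alpha_tilde k (\<eta> s)) *\<^sub>R alpha k)"

text \<open>P_iter n eta = P_{alpha_n} ... P_{alpha_1} P_{alpha_0} eta.\<close>
fun P_iter :: "nat \<Rightarrow> (real \<Rightarrow> real \<times> real) \<Rightarrow> (real \<Rightarrow> real \<times> real)" where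
  "P_iter 0 \<eta> = P_op 0 \<eta>"
| "P_iter (Suc n) \<eta> = P_op (Suc n) (P_iter n \<eta>)"

definition C_aff :: "(real \<times> real) set" where
  "C_aff = {(t, x). 0 \<le> x \<and> x \<le> t}"

definition piecewise_C1_on :: "real \<Rightarrow> real \<Rightarrow> (real \<Rightarrow> real) \<Rightarrow> bool" where
  "piecewise_C1_on a b f \<longleftrightarrow>
     (\<exists>ts :: real list. length ts \<ge> 2 \<and> sorted_wrt (<) ts \<and> hd ts = a \<and> last ts = b \<and>
        (\<forall>i. Suc i < length ts \<longrightarrow>
           (\<exists>f'. continuous_on {ts ! i .. ts ! Suc i} f' \<and>
                 (\<forall>x\<in>{ts ! i .. ts ! Suc i}.
                    (f has_real_derivative f' x) (at x within {ts ! i .. ts ! Suc i})))))"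

end

theory Submission
  imports Defs
begin

definition Oop :: "(real\<Rightarrow>real) \<Rightarrow> real \<Rightarrow> real" where
  "Oop x t = x t - 2 * (INF s\<in>{0..t}. x s)"
definition cj :: "(real\<Rightarrow>real) \<Rightarrow> real \<Rightarrow> real" where
  "cj x t = t - x t"
definition Q :: "nat \<Rightarrow> (real\<Rightarrow>real) \<Rightarrow> real \<Rightarrow> real" where
  "Q k x = (if even k then cj (Oop (cj x)) else Oop x)"
fun R :: "nat \<Rightarrow> nat \<Rightarrow> (real\<Rightarrow>real) \<Rightarrow> real \<Rightarrow> real" where
  "R k 0 x = x" | "R k (Suc j) x = R (Suc k) j (Q k x)"
definition slopes :: "real \<Rightarrow> real \<Rightarrow> real \<Rightarrow> (real\<Rightarrow>real) \<Rightarrow> bool" where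
  "slopes D p q x \<longleftrightarrow> (\<forall>s t. 0 \<le> s \<longrightarrow> s \<le> t \<longrightarrow> t \<le> D \<longrightarrow>
      p*(t-s) \<le> x t - x s \<and> x t - x s \<le> q*(t-s))"
definition good :: "(real\<Rightarrow>real) \<Rightarrow> real \<Rightarrow> bool" where
  "good x \<tau> \<longleftrightarrow> (\<forall>t. 0 \<le> t \<longrightarrow> t \<le> \<tau> \<longrightarrow> 0 \<le> x t \<and> x t \<le> t)"

lemma cj_cj[simp]: "cj (cj x) = x" by (simp add: cj_def fun_eq_iff)

lemma slopes_cj: "slopes D p q (cj x) \<longleftrightarrow> slopes D (1-q) (1-p) x"
proof -
  have "(p*(t-s) \<le> (t - x t) - (s - x s) \<and> (t - x t) - (s - x s) \<le> q*(t-s)) \<longleftrightarrow>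
        ((1-q)*(t-s) \<le> x t - x s \<and> x t - x s \<le> (1-p)*(t-s))" for s t
  proof -
    have e1: "(1-q)*(t-s) = (t-s) - q*(t-s)" by (simp add: left_diff_distrib)
    have e2: "(1-p)*(t-s) = (t-s) - p*(t-s)" by (simp add: left_diff_distrib)
    show ?thesis unfolding e1 e2 by (intro iffI conjI; elim conjE; linarith)
  qed
  then show ?thesis unfolding slopes_def cj_def by presburger
qed

lemma slopes_D: "slopes D p q x \<Longrightarrow> 0 \<le> s \<Longrightarrow> s \<le> t \<Longrightarrow> t \<le> D \<Longrightarrow>
   p*(t-s) \<le> x t - x s \<and> x t - x s \<le> q*(t-s)"
  unfolding slopes_def by blast

lemma slopes_neg: "slopes D p q x \<Longrightarrow> slopes D (-q) (-p) (\<lambda>t. - x t)"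
  unfolding slopes_def
proof (intro allI impI)
  fix s t assume h: "\<forall>s t. 0 \<le> s \<longrightarrow> s \<le> t \<longrightarrow> t \<le> D \<longrightarrow> p * (t - s) \<le> x t - x s \<and> x t - x s \<le> q * (t - s)"
    "0 \<le> s" "s \<le> t" "t \<le> D"
  then have "p * (t - s) \<le> x t - x s \<and> x t - x s \<le> q * (t - s)" by blast
  then show "- q * (t - s) \<le> - x t - - x s \<and> - x t - - x s \<le> - p * (t - s)" by simp
qed

lemma slopes_cong: "slopes D p q x \<Longrightarrow> (\<And>t. 0 \<le> t \<Longrightarrow> t \<le> D \<Longrightarrow> y t = x t) \<Longrightarrow> slopes D p q y"
  unfolding slopes_def
proof (intro allI impI)
  fix s t assume h: "\<forall>s t. 0 \<le> s \<longrightarrow> s \<le> t \<longrightarrow> t \<le> D \<longrightarrow> p * (t - s) \<le> x t - x s \<and> x t - x s \<le> q * (t - s)"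
    "\<And>t. 0 \<le> t \<Longrightarrow> t \<le> D \<Longrightarrow> y t = x t" "0 \<le> s" "s \<le> t" "t \<le> D"
  then have "p * (t - s) \<le> x t - x s \<and> x t - x s \<le> q * (t - s)" by blast
  moreover have "y t = x t" "y s = x s" using h by auto
  ultimately show "p * (t - s) \<le> y t - y s \<and> y t - y s \<le> q * (t - s)" by simp
qed

lemma slopes_mono: "slopes D p q x \<Longrightarrow> p' \<le> p \<Longrightarrow> q \<le> q' \<Longrightarrow> slopes D p' q' x"
  unfolding slopes_def
proof (intro allI impI)
  fix s t assume h: "\<forall>s t. 0 \<le> s \<longrightarrow> s \<le> t \<longrightarrow> t \<le> D \<longrightarrow> p * (t - s) \<le> x t - x s \<and> x t - x s \<le> q * (t - s)"
    "p' \<le> p" "q \<le> q'" "0 \<le> s" "s \<le> t" "t \<le> D"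
  then have "p * (t - s) \<le> x t - x s \<and> x t - x s \<le> q * (t - s)" by blast
  moreover have "p' * (t-s) \<le> p * (t-s)" "q * (t-s) \<le> q' * (t-s)" using h by (auto intro: mult_right_mono)
  ultimately show "p' * (t - s) \<le> x t - x s \<and> x t - x s \<le> q' * (t - s)" by linarith
qed

lemma good_cj: "good (cj x) \<tau> \<longleftrightarrow> good x \<tau>"
  unfolding good_def cj_def by auto

lemma good_mono: "good x \<tau> \<Longrightarrow> \<tau>' \<le> \<tau> \<Longrightarrow> good x \<tau>'"
  unfolding good_def by auto

lemma slopes_bdd: assumes "slopes D p q x" "x 0 = 0" "0 \<le> t" "t \<le> D"
  shows "bdd_below (x ` {0..t})"
proof (rule bdd_belowI[where m="-\<bar>p\<bar>*t"])
  fix y assume "y \<in> x ` {0..t}"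
  then obtain u where u: "0 \<le> u" "u \<le> t" "y = x u" by auto
  have "p*(u-0) \<le> x u - x 0" using slopes_D[OF assms(1), of 0 u] u assms by auto
  moreover have "-\<bar>p\<bar>*t \<le> p*u"
  proof -
    have "\<bar>p\<bar>*u \<le> \<bar>p\<bar>*t" using u by (simp add: mult_left_mono)
    moreover have "-\<bar>p\<bar>*u \<le> p*u"
    proof -
      have "0 \<le> (p + \<bar>p\<bar>)*u" using u by (intro mult_nonneg_nonneg) auto
      then show ?thesis unfolding distrib_right by linarith
    qed
    ultimately show ?thesis by linarith
  qed
  ultimately show "-\<bar>p\<bar>*t \<le> y" using u assms by simp
qed

lemma INF_ge: "0 \<le> (t::real) \<Longrightarrow> (\<And>s. 0 \<le> s \<Longrightarrow> s \<le> t \<Longrightarrow> (c::real) \<le> x s) \<Longrightarrow> c \<le> (INF s\<in>{0..t}. x s)"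
  by (rule cINF_greatest) auto

lemma INF_le: "bdd_below ((x::real\<Rightarrow>real) ` {0..t}) \<Longrightarrow> 0 \<le> s \<Longrightarrow> s \<le> t \<Longrightarrow> (INF s\<in>{0..t}. x s) \<le> x s"
  by (rule cINF_lower) auto

lemma Oop_zero: "x 0 = 0 \<Longrightarrow> Oop x 0 = 0" by (simp add: Oop_def)
lemma cj_zero: "x 0 = 0 \<Longrightarrow> cj x 0 = 0" by (simp add: cj_def)
lemma Q_zero: "x 0 = 0 \<Longrightarrow> Q k x 0 = 0" by (simp add: Q_def Oop_zero cj_zero)

lemma Oop_ge0: "bdd_below (x ` {0..t}) \<Longrightarrow> x 0 = 0 \<Longrightarrow> 0 \<le> t \<Longrightarrow> 0 \<le> Oop x t"
proof -
  assume a: "bdd_below (x ` {0..t})" "x 0 = 0" "0 \<le> t"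
  have "(INF s\<in>{0..t}. x s) \<le> x t" by (rule INF_le) (use a in auto)
  moreover have "(INF s\<in>{0..t}. x s) \<le> x 0" by (rule INF_le) (use a in auto)
  ultimately show ?thesis unfolding Oop_def using a(2) by linarith
qed

lemma Oop_id: assumes "x 0 = 0" "0 \<le> t" "\<And>s. 0\<le>s \<Longrightarrow> s\<le>t \<Longrightarrow> 0 \<le> x s"
  shows "Oop x t = x t"
proof -
  have b: "bdd_below (x ` {0..t})" by (rule bdd_belowI[where m=0]) (use assms in auto)
  have "0 \<le> (INF s\<in>{0..t}. x s)" by (rule INF_ge) (use assms in auto)
  moreover have "(INF s\<in>{0..t}. x s) \<le> x 0" by (rule INF_le[OF b]) (use assms in auto)
  ultimately show ?thesis using assms unfolding Oop_def by linarith
qed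

lemma Oop_neg: assumes "0 \<le> t" "\<And>s. 0\<le>s \<Longrightarrow> s\<le>t \<Longrightarrow> x t \<le> x s"
  shows "Oop x t = - x t"
proof -
  have b: "bdd_below (x ` {0..t})" by (rule bdd_belowI[where m="x t"]) (use assms in auto)
  have "x t \<le> (INF s\<in>{0..t}. x s)" by (rule INF_ge) (use assms in auto)
  moreover have "(INF s\<in>{0..t}. x s) \<le> x t" by (rule INF_le[OF b]) (use assms in auto)
  ultimately show ?thesis using assms unfolding Oop_def by linarith
qed

lemma R_Suc: "R k (Suc j) x = Q (k + j) (R k j x)"
  by (induction j arbitrary: k x) auto



lemma Oop_slopes:
  assumes sl: "slopes D (-A) (1+A) x" and x0: "x 0 = 0" and A: "0 \<le> A"
  shows "slopes D (-A) (1+A) (Oop x)"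
  unfolding slopes_def
proof (intro allI impI)
  fix s t :: real assume st: "0 \<le> s" "s \<le> t" "t \<le> D"
  define M where "M r = (INF u\<in>{0..r}. x u)" for r
  have bt: "bdd_below (x ` {0..t})" using slopes_bdd[OF sl x0] st by auto
  have bs: "bdd_below (x ` {0..s})" using slopes_bdd[OF sl x0] st by auto
  have Mt_le: "M t \<le> x u" if "0 \<le> u" "u \<le> t" for u
    unfolding M_def by (rule INF_le[OF bt]) (use that in auto)
  have Ms_le: "M s \<le> x u" if "0 \<le> u" "u \<le> s" for u
    unfolding M_def by (rule INF_le[OF bs]) (use that in auto)
  have Mts: "M t \<le> M s"
    unfolding M_def[of s] by (rule INF_ge[OF st(1)]) (rule Mt_le, use st in auto)
  have xts: "-A*(t-s) \<le> x t - x s" "x t - x s \<le> (1+A)*(t-s)"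
    using slopes_D[OF sl st] by auto
  have up: "(x t - x s + 2*M s - (1+A)*(t-s))/2 \<le> M t"
    unfolding M_def[of t]
  proof (rule INF_ge[OF order_trans[OF st(1) st(2)]])
    fix u assume u: "0 \<le> u" "u \<le> t"
    show "(x t - x s + 2*M s - (1+A)*(t-s))/2 \<le> x u"
    proof (cases "u \<le> s")
      case True
      then have "M s \<le> x u" using Ms_le u by auto
      then have "x t - x s + 2*M s - (1+A)*(t-s) \<le> 2 * x u" using xts(2) by linarith
      then show ?thesis by (simp add: field_simps)
    next
      case False
      have "M s \<le> x s" using Ms_le st by auto
      have a1: "x t - x u \<le> (1+A)*(t-u)" using slopes_D[OF sl, of u t] u st False by auto
      have a2: "(-A)*(u-s) \<le> x u - x s" using slopes_D[OF sl, of s u] u st False by auto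
      have e: "(-A)*(u-s) = -(A*(u-s))" by simp
      have e2: "(1+A)*(t-s) = (1+A)*(t-u) + (u-s) + A*(u-s)" by (simp add: algebra_simps)
      have "x t - x s + 2*M s - (1+A)*(t-s) \<le> 2 * x u" using \<open>M s \<le> x s\<close> a1 a2 e e2 False by linarith
      then show ?thesis by (simp add: field_simps)
    qed
  qed
  have O: "Oop x r = x r - 2 * M r" for r by (simp add: Oop_def M_def)
  show "- A * (t - s) \<le> Oop x t - Oop x s \<and> Oop x t - Oop x s \<le> (1 + A) * (t - s)"
  proof -
    have "x t - x s + 2*M s - (1+A)*(t-s) \<le> 2 * M t" using up by (simp add: field_simps)
    then show ?thesis unfolding O using Mts xts by linarith
  qed
qed

lemma slopes_cjA: "slopes D (-A) (1+A) x \<Longrightarrow> slopes D (-A) (1+A) (cj x)"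
  using slopes_cj[of D "-A" "1+A" x] by simp

lemma Q_slopes: "slopes D (-A) (1+A) x \<Longrightarrow> x 0 = 0 \<Longrightarrow> 0 \<le> A \<Longrightarrow> slopes D (-A) (1+A) (Q k x)"
  unfolding Q_def
  by (auto intro!: slopes_cjA Oop_slopes cj_zero)

lemma slopes_of_cj: "slopes D p q x \<Longrightarrow> slopes D (1-q) (1-p) (cj x)"
  using slopes_cj[of D "1-q" "1-p" x] by simp

lemma Q_bounds: assumes "slopes D p q x" "x 0 = 0" "0 \<le> t" "t \<le> D"
  shows "(odd k \<longrightarrow> 0 \<le> Q k x t) \<and> (even k \<longrightarrow> Q k x t \<le> t)"
proof -
  have "0 \<le> Oop x t" by (rule Oop_ge0[OF slopes_bdd[OF assms]]) (use assms in auto)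
  moreover have "0 \<le> Oop (cj x) t"
    by (rule Oop_ge0[OF slopes_bdd[OF slopes_of_cj[OF assms(1)] cj_zero[of x, OF assms(2)] assms(3,4)]])
       (use assms in \<open>auto simp: cj_def\<close>)
  ultimately show ?thesis by (auto simp: Q_def cj_def)
qed

lemma Q_stable: assumes "good x \<tau>" "x 0 = 0" "0 \<le> t" "t \<le> \<tau>"
  shows "Q k x t = x t"
proof -
  have g: "0 \<le> x s \<and> x s \<le> s" if "0 \<le> s" "s \<le> t" for s
    using assms that unfolding good_def by auto
  have "Oop x t = x t" by (rule Oop_id) (use assms g in auto)
  moreover have "Oop (cj x) t = cj x t"
    by (rule Oop_id) (use assms g in \<open>auto simp: cj_def\<close>)
  ultimately show ?thesis by (auto simp: Q_def cj_def)
qed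

lemma good_Q: "good x \<tau> \<Longrightarrow> x 0 = 0 \<Longrightarrow> good (Q k x) \<tau>"
  using Q_stable unfolding good_def by metis

lemma good_R: "good x \<tau> \<Longrightarrow> x 0 = 0 \<Longrightarrow> good (R k j x) \<tau>"
proof (induction j arbitrary: k x)
  case 0 then show ?case by simp
next
  case (Suc j) then show ?case by (simp add: good_Q Q_zero)
qed

lemma R_zero: "x 0 = 0 \<Longrightarrow> R k j x 0 = 0"
  by (induction j arbitrary: k x) (auto simp: Q_zero)

lemma R_slopes: "slopes D (-A) (1+A) x \<Longrightarrow> x 0 = 0 \<Longrightarrow> 0 \<le> A \<Longrightarrow> slopes D (-A) (1+A) (R k j x)"
  by (induction j arbitrary: k x) (auto simp: Q_zero Q_slopes)


lemma grow_O:
  assumes A: "0 < A" and sl: "slopes T (-A) (1+A) y" and y0: "y 0 = 0"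
    and le: "\<And>t. 0 \<le> t \<Longrightarrow> t \<le> T \<Longrightarrow> y t \<le> t" and g: "good y (min T \<tau>)" and tau: "0 \<le> \<tau>"
  shows "good (Oop y) (min T (\<tau> * (1 + 1/(3*A))))"
  unfolding good_def
proof (intro allI impI)
  fix t assume t: "0 \<le> t" "t \<le> min T (\<tau> * (1 + 1/(3*A)))"
  then have tT: "t \<le> T" and tt: "t \<le> \<tau>*(1+1/(3*A))" by auto
  define M where "M = (INF u\<in>{0..t}. y u)"
  have bt: "bdd_below (y ` {0..t})" by (rule slopes_bdd[OF sl y0 t(1) tT])
  have O: "Oop y t = y t - 2*M" by (simp add: Oop_def M_def)
  have ge0: "0 \<le> Oop y t" by (rule Oop_ge0[OF bt y0 t(1)])
  have gu: "0 \<le> y u" if "0 \<le> u" "u \<le> T" "u \<le> \<tau>" for u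
    using g that unfolding good_def by auto
  have "Oop y t \<le> t"
  proof (cases "t \<le> \<tau>")
    case True
    have "0 \<le> M" unfolding M_def by (rule INF_ge[OF t(1)]) (use gu True tT in auto)
    then show ?thesis using O le[OF t(1) tT] by linarith
  next
    case False
    define h where "h = t - \<tau>"
    have "t \<le> \<tau> + \<tau>/(3*A)" using tt by (simp add: distrib_left)
    then have "h \<le> \<tau>/(3*A)" by (simp add: h_def)
    then have "h*(3*A) \<le> \<tau>" using A by (simp add: pos_le_divide_eq)
    then have h3: "3*(A*h) \<le> \<tau>" by (simp add: algebra_simps)
    have tauT: "\<tau> \<le> T" "\<tau> \<le> t" using False tT by auto
    have ytau: "0 \<le> y \<tau>" using gu tau tauT by auto
    have Mge: "min 0 (y \<tau> - A*h) \<le> M" unfolding M_def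
    proof (rule INF_ge[OF t(1)])
      fix u assume u: "0 \<le> u" "u \<le> t"
      show "min 0 (y \<tau> - A*h) \<le> y u"
      proof (cases "u \<le> \<tau>")
        case True then have "0 \<le> y u" using gu u tT by auto
        then show ?thesis by (simp add: min_def)
      next
        case False
        have a: "(-A)*(u-\<tau>) \<le> y u - y \<tau>" using slopes_D[OF sl, of \<tau> u] tau False u tT by auto
        have e: "(-A)*(u-\<tau>) = -(A*(u-\<tau>))" by simp
        have "A*(u-\<tau>) \<le> A*h" using A u unfolding h_def by (intro mult_left_mono) auto
        then show ?thesis using a e by (simp add: min_def)
      qed
    qed
    have yt: "y t - y \<tau> \<le> (1+A)*(t-\<tau>)" using slopes_D[OF sl, of \<tau> t] tau tauT tT by auto
    have e1: "(1+A)*(t-\<tau>) = h + A*h" by (simp add: h_def algebra_simps)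
    show ?thesis
    proof (cases "0 \<le> y \<tau> - A*h")
      case True then have "0 \<le> M" using Mge by (simp add: min_def)
      then show ?thesis using O le[OF t(1) tT] by linarith
    next
      case False then have "y \<tau> - A*h \<le> M" using Mge by (simp add: min_def)
      then show ?thesis using O yt e1 h3 ytau h_def by linarith
    qed
  qed
  then show "0 \<le> Oop y t \<and> Oop y t \<le> t" using ge0 by simp
qed

lemma grow_Q:
  assumes A: "0 < A" and sl: "slopes T (-A) (1+A) x" and x0: "x 0 = 0"
    and par: "(odd k \<longrightarrow> (\<forall>t. 0 \<le> t \<longrightarrow> t \<le> T \<longrightarrow> x t \<le> t)) \<and> (even k \<longrightarrow> (\<forall>t. 0 \<le> t \<longrightarrow> t \<le> T \<longrightarrow> 0 \<le> x t))"
    and g: "good x (min T \<tau>)" and tau: "0 \<le> \<tau>"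
  shows "good (Q k x) (min T (\<tau> * (1 + 1/(3*A))))"
proof (cases "even k")
  case True
  have g': "good (cj x) (min T \<tau>)" using g by (simp add: good_cj)
  have l': "cj x t \<le> t" if "0 \<le> t" "t \<le> T" for t using par True that by (auto simp: cj_def)
  have "good (Oop (cj x)) (min T (\<tau> * (1 + 1/(3*A))))"
    by (rule grow_O[OF A slopes_cjA[OF sl] cj_zero[of x, OF x0] l' g' tau])
  then show ?thesis using True by (simp add: Q_def good_cj)
next
  case False
  have "good (Oop x) (min T (\<tau> * (1 + 1/(3*A))))"
    by (rule grow_O[OF A sl x0]) (use par False g tau in auto)
  then show ?thesis using False by (simp add: Q_def)
qed


lemma slopes_eq: "slopes D p q x \<Longrightarrow> p = p' \<Longrightarrow> q = q' \<Longrightarrow> slopes D p' q' x" by simp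

lemma corner_good: assumes sl: "slopes D (a-1/4) (a+1/4) x" and x0: "x 0 = 0"
  and a: "1/4 \<le> a" "a \<le> 3/4" shows "good x D"
  unfolding good_def
proof (intro allI impI)
  fix t assume t: "0 \<le> t" "t \<le> D"
  have "(a-1/4)*(t-0) \<le> x t - x 0 \<and> x t - x 0 \<le> (a+1/4)*(t-0)" by (rule slopes_D[OF sl]) (use t in auto)
  moreover have "0 \<le> (a-1/4)*t" using a t by simp
  moreover have "(a+1/4)*t \<le> 1*t" using a t by (intro mult_right_mono) auto
  ultimately show "0 \<le> x t \<and> x t \<le> t" using x0 by simp
qed

lemma corner_Oop_pos: assumes sl: "slopes D (a-1/4) (a+1/4) x" and x0: "x 0 = 0"
  and a: "1/4 \<le> a" and t: "0 \<le> t" "t \<le> D" shows "Oop x t = x t"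
proof (rule Oop_id[of x t, OF x0 t(1)])
  fix s assume s: "0 \<le> s" "s \<le> t"
  have "(a-1/4)*(s-0) \<le> x s - x 0" using slopes_D[OF sl, of 0 s] s t by auto
  moreover have "0 \<le> (a-1/4)* s" using a s by simp
  ultimately show "0 \<le> x s" using x0 by simp
qed

lemma corner_Oop_neg: assumes sl: "slopes D (a-1/4) (a+1/4) x"
  and a: "a \<le> -1/4" and t: "0 \<le> t" "t \<le> D" shows "Oop x t = - x t"
proof (rule Oop_neg[OF t(1)])
  fix s assume s: "0 \<le> s" "s \<le> t"
  have "x t - x s \<le> (a+1/4)*(t-s)" using slopes_D[OF sl, of s t] s t by auto
  moreover have "(a+1/4)*(t-s) \<le> 0" using a s by (intro mult_nonpos_nonneg) auto
  ultimately show "x t \<le> x s" by simp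
qed

lemma corner_Oop_mid: assumes sl: "slopes D (a-1/4) (a+1/4) x" and x0: "x 0 = 0"
  and a: "-1/4 < a" "a < 1/4" and t: "0 \<le> t" "t \<le> D" shows "0 \<le> Oop x t \<and> Oop x t \<le> t"
proof -
  have bt: "bdd_below (x ` {0..t})" by (rule slopes_bdd[OF sl x0 t])
  have "(a-1/4)*t \<le> (INF u\<in>{0..t}. x u)"
  proof (rule INF_ge[OF t(1)])
    fix u assume u: "0 \<le> u" "u \<le> t"
    have "(a-1/4)*(u-0) \<le> x u - x 0" using slopes_D[OF sl, of 0 u] u t by auto
    moreover have "(a-1/4)*t \<le> (a-1/4)*u" using a u by (intro mult_left_mono_neg) auto
    ultimately show "(a-1/4)*t \<le> x u" using x0 by simp
  qed
  moreover have "x t - x 0 \<le> (a+1/4)*(t-0)" using slopes_D[OF sl, of 0 t] t by auto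
  moreover have "(a+1/4)*t - 2*((a-1/4)*t) = (3/4 - a)*t" by (simp add: algebra_simps)
  moreover have "(3/4 - a)*t \<le> 1*t" using a t by (intro mult_right_mono) auto
  ultimately have "Oop x t \<le> t" using x0 unfolding Oop_def by simp
  moreover have "0 \<le> Oop x t" by (rule Oop_ge0[OF bt x0 t(1)])
  ultimately show ?thesis by simp
qed

lemma corner_Q_odd: assumes sl: "slopes D (a-1/4) (a+1/4) x" and x0: "x 0 = 0" and k: "odd k"
  shows "(a \<le> -1/4 \<longrightarrow> slopes D (-a-1/4) (-a+1/4) (Q k x))
       \<and> (1/4 \<le> a \<longrightarrow> slopes D (a-1/4) (a+1/4) (Q k x))
       \<and> (-1/4 < a \<and> a < 1/4 \<longrightarrow> good (Q k x) D)"
proof -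
  have Qe: "Q k x = Oop x" using k by (simp add: Q_def)
  have 1: "slopes D (-a-1/4) (-a+1/4) (Q k x)" if a: "a \<le> -1/4"
  proof -
    have "slopes D (-(a+1/4)) (-(a-1/4)) (Q k x)"
      by (rule slopes_cong[OF slopes_neg[OF sl]]) (use corner_Oop_neg[OF sl a] Qe in auto)
    then show ?thesis by (rule slopes_eq) auto
  qed
  have 2: "slopes D (a-1/4) (a+1/4) (Q k x)" if a: "1/4 \<le> a"
    by (rule slopes_cong[OF sl]) (use corner_Oop_pos[OF sl x0 a] Qe in auto)
  have 3: "good (Q k x) D" if a: "-1/4 < a" "a < 1/4"
    unfolding good_def Qe using corner_Oop_mid[OF sl x0 a] by auto
  show ?thesis using 1 2 3 by blast
qed

lemma corner_Q_even: assumes sl: "slopes D (a-1/4) (a+1/4) x" and x0: "x 0 = 0" and k: "even k"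
  shows "(5/4 \<le> a \<longrightarrow> slopes D ((2-a)-1/4) ((2-a)+1/4) (Q k x))
       \<and> (a \<le> 3/4 \<longrightarrow> slopes D (a-1/4) (a+1/4) (Q k x))
       \<and> (3/4 < a \<and> a < 5/4 \<longrightarrow> good (Q k x) D)"
proof -
  have Qe: "Q k x = cj (Q (Suc k) (cj x))" using k by (simp add: Q_def)
  have slc: "slopes D ((1-a)-1/4) ((1-a)+1/4) (cj x)"
    by (rule slopes_eq[OF slopes_of_cj[OF sl]]) auto
  note C = corner_Q_odd[OF slc cj_zero[of x, OF x0], of "Suc k"]
  have 1: "slopes D ((2-a)-1/4) ((2-a)+1/4) (Q k x)" if a: "5/4 \<le> a"
  proof -
    have "slopes D (-(1-a)-1/4) (-(1-a)+1/4) (Q (Suc k) (cj x))" using C k a by auto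
    then show ?thesis unfolding Qe by (rule slopes_eq[OF slopes_of_cj]) auto
  qed
  have 2: "slopes D (a-1/4) (a+1/4) (Q k x)" if a: "a \<le> 3/4"
  proof -
    have "slopes D ((1-a)-1/4) ((1-a)+1/4) (Q (Suc k) (cj x))" using C k a by auto
    then show ?thesis unfolding Qe by (rule slopes_eq[OF slopes_of_cj]) auto
  qed
  have 3: "good (Q k x) D" if a: "3/4 < a" "a < 5/4"
    using C k a unfolding Qe good_cj by auto
  show ?thesis using 1 2 3 by blast
qed

definition dd :: "real \<Rightarrow> real" where "dd a = max (max (a - 1) (-a)) 0"

lemma dd_refl1: "5/4 \<le> a \<Longrightarrow> dd (2-a) \<le> dd a - 1/4 \<and> 1/4 \<le> dd a"
  unfolding dd_def by (simp add: max_def)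
lemma dd_refl0: "a \<le> -1/4 \<Longrightarrow> dd (-a) \<le> dd a - 1/4 \<and> 1/4 \<le> dd a"
  unfolding dd_def by (simp add: max_def)

lemma dd_step: assumes "dd a \<le> real n / 4" "dd b \<le> dd a - 1/4 \<and> 1/4 \<le> dd a"
  shows "n - 1 < n \<and> dd b \<le> real (n-1) / 4"
proof -
  have "1 \<le> real n" using assms by linarith
  then have n: "1 \<le> n" by simp
  then have "real (n-1) = real n - 1" by (simp add: of_nat_diff)
  then show ?thesis using assms n by auto
qed

lemma corner_main:
  "dd a \<le> real n / 4 \<Longrightarrow> slopes D (a-1/4) (a+1/4) x \<Longrightarrow> x 0 = 0 \<Longrightarrow> \<exists>j. good (R k j x) D"
proof (induction n arbitrary: a k x rule: less_induct)
  case (less n)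
  note sl = less.prems(2) and x0 = less.prems(3) and dn = less.prems(1)
  have R1: "R k (Suc 0) x = Q k x" by simp
  have R2: "R k (Suc (Suc 0)) x = Q (Suc k) (Q k x)" by simp
  show ?case
  proof (cases "1/4 \<le> a \<and> a \<le> 3/4")
    case True
    then have "good (R k 0 x) D" using corner_good[OF sl x0] by simp
    then show ?thesis by blast
  next
    case nmid: False
    show ?thesis
    proof (cases "even k")
      case ev: True
      note C = corner_Q_even[OF sl x0 ev]
      consider "5/4 \<le> a" | "3/4 < a \<and> a < 5/4" | "a < 1/4" using nmid by linarith
      then show ?thesis
      proof cases
        case 1
        have sl1: "slopes D ((2-a)-1/4) ((2-a)+1/4) (Q k x)" using C 1 by simp
        have d: "n - 1 < n \<and> dd (2-a) \<le> real (n-1) / 4" by (rule dd_step[OF dn dd_refl1[OF 1]])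
        obtain j where "good (R (Suc k) j (Q k x)) D"
          using less.IH[of "n-1" "2-a" "Q k x" "Suc k"] d sl1 Q_zero[of x, OF x0] by blast
        then have "good (R k (Suc j) x) D" by simp
        then show ?thesis by blast
      next
        case 2
        then have "good (R k (Suc 0) x) D" using C by simp
        then show ?thesis by blast
      next
        case 3
        have sl1: "slopes D (a-1/4) (a+1/4) (Q k x)" using C 3 by simp
        have od: "odd (Suc k)" using ev by simp
        note C2 = corner_Q_odd[OF sl1 Q_zero[of x, OF x0] od]
        show ?thesis
        proof (cases "a \<le> -1/4")
          case True
          have sl2: "slopes D (-a-1/4) (-a+1/4) (Q (Suc k) (Q k x))" using C2 True by simp
          have d: "n - 1 < n \<and> dd (-a) \<le> real (n-1) / 4" by (rule dd_step[OF dn dd_refl0[OF True]])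
          have z: "Q (Suc k) (Q k x) 0 = 0" by (rule Q_zero, rule Q_zero, rule x0)
          obtain j where "good (R (Suc (Suc k)) j (Q (Suc k) (Q k x))) D"
            using less.IH[of "n-1" "-a" "Q (Suc k) (Q k x)" "Suc (Suc k)"] d sl2 z by blast
          then have "good (R k (Suc (Suc j)) x) D" by simp
          then show ?thesis by blast
        next
          case False
          then have "good (R k (Suc (Suc 0)) x) D" using C2 3 by simp
          then show ?thesis by blast
        qed
      qed
    next
      case od: False
      note C = corner_Q_odd[OF sl x0 od]
      consider "a \<le> -1/4" | "-1/4 < a \<and> a < 1/4" | "3/4 < a" using nmid by linarith
      then show ?thesis
      proof cases
        case 1
        have sl1: "slopes D (-a-1/4) (-a+1/4) (Q k x)" using C 1 by simp
        have d: "n - 1 < n \<and> dd (-a) \<le> real (n-1) / 4" by (rule dd_step[OF dn dd_refl0[OF 1]])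
        obtain j where "good (R (Suc k) j (Q k x)) D"
          using less.IH[of "n-1" "-a" "Q k x" "Suc k"] d sl1 Q_zero[of x, OF x0] by blast
        then have "good (R k (Suc j) x) D" by simp
        then show ?thesis by blast
      next
        case 2
        then have "good (R k (Suc 0) x) D" using C by simp
        then show ?thesis by blast
      next
        case 3
        have sl1: "slopes D (a-1/4) (a+1/4) (Q k x)" using C 3 by simp
        have ev: "even (Suc k)" using od by simp
        note C2 = corner_Q_even[OF sl1 Q_zero[of x, OF x0] ev]
        show ?thesis
        proof (cases "5/4 \<le> a")
          case True
          have sl2: "slopes D ((2-a)-1/4) ((2-a)+1/4) (Q (Suc k) (Q k x))" using C2 True by simp
          have d: "n - 1 < n \<and> dd (2-a) \<le> real (n-1) / 4" by (rule dd_step[OF dn dd_refl1[OF True]])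
          have z: "Q (Suc k) (Q k x) 0 = 0" by (rule Q_zero, rule Q_zero, rule x0)
          obtain j where "good (R (Suc (Suc k)) j (Q (Suc k) (Q k x))) D"
            using less.IH[of "n-1" "2-a" "Q (Suc k) (Q k x)" "Suc (Suc k)"] d sl2 z by blast
          then have "good (R k (Suc (Suc j)) x) D" by simp
          then show ?thesis by blast
        next
          case False
          then have "good (R k (Suc (Suc 0)) x) D" using C2 3 by simp
          then show ?thesis by blast
        qed
      qed
    qed
  qed
qed


lemma P_op_eq: "P_op k (\<lambda>t. (t, X t)) = (\<lambda>t. (t, Q k X t))"
  by (rule ext) (simp add: P_op_def alpha_def alpha_tilde_def Q_def Oop_def cj_def)

lemma P_iter_eq: "P_iter n (\<lambda>t. (t, \<pi> t)) = (\<lambda>t. (t, R 0 (Suc n) \<pi> t))"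
proof (induction n)
  case 0 then show ?case by (simp add: P_op_eq)
next
  case (Suc n)
  have "P_iter (Suc n) (\<lambda>t. (t, \<pi> t)) = P_op (Suc n) (\<lambda>t. (t, R 0 (Suc n) \<pi> t))"
    using Suc by simp
  also have "\<dots> = (\<lambda>t. (t, Q (Suc n) (R 0 (Suc n) \<pi>) t))" by (rule P_op_eq)
  also have "\<dots> = (\<lambda>t. (t, R 0 (Suc (Suc n)) \<pi> t))" using R_Suc[of 0 "Suc n" \<pi>] by simp
  finally show ?case .
qed

lemma mvt_piece:
  assumes "a \<le> s" "s \<le> t" "t \<le> b" "\<forall>x\<in>{a..b}. (f has_real_derivative f' x) (at x within {a..b})"
  shows "\<exists>z\<in>{s..t}. f t - f s = f' z * (t - s)"
proof -
  have "\<exists>z\<in>{s..t}. f t - f s = (*) (f' z) (t - s)"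
  proof (rule mvt_very_simple[OF assms(2)])
    fix x assume x: "s \<le> x" "x \<le> t"
    then have "(f has_real_derivative f' x) (at x within {a..b})" using assms by auto
    then have "(f has_real_derivative f' x) (at x within {s..t})"
      by (rule has_field_derivative_subset) (use assms in auto)
    then show "(f has_derivative (*) (f' x)) (at x within {s..t})" by (simp add: has_field_derivative_def)
  qed
  then show ?thesis by simp
qed

lemma piece_lip:
  assumes "a \<le> b" "continuous_on {a..b} f'" "\<forall>x\<in>{a..b}. (f has_real_derivative f' x) (at x within {a..b})"
  shows "\<exists>L\<ge>0. \<forall>s t. a \<le> s \<longrightarrow> s \<le> t \<longrightarrow> t \<le> b \<longrightarrow> \<bar>f t - f s\<bar> \<le> L*(t-s)"
proof -
  have "bounded (f' ` {a..b})" by (rule compact_imp_bounded[OF compact_continuous_image[OF assms(2) compact_Icc]])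
  then obtain B where B: "\<forall>y\<in>f' ` {a..b}. norm y \<le> B" by (auto simp: bounded_iff)
  have B0: "0 \<le> B" using B assms(1) by force
  show ?thesis
  proof (rule exI[of _ B], intro conjI allI impI)
    show "0 \<le> B" by (rule B0)
  next
    fix s t assume st: "a \<le> s" "s \<le> t" "t \<le> b"
    obtain z where z: "z \<in> {s..t}" "f t - f s = f' z * (t - s)" using mvt_piece[OF st assms(3)] by blast
    have "\<bar>f' z\<bar> \<le> B" using B z st by auto
    then have "\<bar>f' z\<bar> * (t-s) \<le> B * (t-s)" using st by (intro mult_right_mono) auto
    then show "\<bar>f t - f s\<bar> \<le> B*(t-s)" using z st by (simp add: abs_mult)
  qed
qed


lemma lip_global:
  assumes len: "length ts \<ge> 2" and srt: "sorted_wrt (<) ts" and hd: "hd ts = 0" and lst: "last ts = T"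
    and pieces: "\<forall>i. Suc i < length ts \<longrightarrow>
           (\<exists>f'. continuous_on {ts ! i .. ts ! Suc i} f' \<and>
                 (\<forall>x\<in>{ts ! i .. ts ! Suc i}.
                    (\<pi> has_real_derivative f' x) (at x within {ts ! i .. ts ! Suc i})))"
  shows "\<exists>L\<ge>0. \<forall>s t. 0 \<le> s \<longrightarrow> s \<le> t \<longrightarrow> t \<le> T \<longrightarrow> \<bar>\<pi> t - \<pi> s\<bar> \<le> L*(t-s)"
proof -
  have ne: "ts \<noteq> []" using len by auto
  have h0: "ts!0 = 0" using hd hd_conv_nth[OF ne] by simp
  have nn: "0 \<le> ts!i" if "i < length ts" for i
  proof (cases "i = 0")
    case True then show ?thesis using h0 by simp
  next
    case False then have "ts!0 < ts!i" using sorted_wrt_nth_less[OF srt, of 0 i] that by auto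
    then show ?thesis using h0 by simp
  qed
  have main: "i < length ts \<longrightarrow> (\<exists>L\<ge>0. \<forall>s t. 0 \<le> s \<longrightarrow> s \<le> t \<longrightarrow> t \<le> ts!i \<longrightarrow> \<bar>\<pi> t - \<pi> s\<bar> \<le> L*(t-s))" for i
  proof (induction i)
    case 0
    show ?case
    proof (intro impI exI[of _ 0] conjI allI)
      fix s t :: real assume "0 \<le> s" "s \<le> t" "t \<le> ts!0"
      then have "s = t" using h0 by simp
      then show "\<bar>\<pi> t - \<pi> s\<bar> \<le> 0*(t-s)" by simp
    qed simp
  next
    case (Suc i)
    show ?case
    proof
      assume si: "Suc i < length ts"
      obtain L1 where L1: "L1 \<ge> 0" "\<forall>s t. 0 \<le> s \<longrightarrow> s \<le> t \<longrightarrow> t \<le> ts!i \<longrightarrow> \<bar>\<pi> t - \<pi> s\<bar> \<le> L1*(t-s)"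
        using Suc si by auto
      have ord: "ts!i < ts!Suc i" using sorted_wrt_nth_less[OF srt, of i "Suc i"] si by auto
      obtain f' where f': "continuous_on {ts ! i .. ts ! Suc i} f'"
         "\<forall>x\<in>{ts ! i .. ts ! Suc i}. (\<pi> has_real_derivative f' x) (at x within {ts ! i .. ts ! Suc i})"
        using pieces si by blast
      obtain L2 where L2: "L2 \<ge> 0" "\<forall>s t. ts!i \<le> s \<longrightarrow> s \<le> t \<longrightarrow> t \<le> ts!Suc i \<longrightarrow> \<bar>\<pi> t - \<pi> s\<bar> \<le> L2*(t-s)"
        using piece_lip[OF less_imp_le[OF ord] f'] by blast
      have i0: "0 \<le> ts!i" using nn si by simp
      show "\<exists>L\<ge>0. \<forall>s t. 0 \<le> s \<longrightarrow> s \<le> t \<longrightarrow> t \<le> ts!Suc i \<longrightarrow> \<bar>\<pi> t - \<pi> s\<bar> \<le> L*(t-s)"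
      proof (rule exI[of _ "max L1 L2"], intro conjI allI impI)
        show "0 \<le> max L1 L2" using L1 by simp
      next
        fix s t assume st: "0 \<le> s" "s \<le> t" "t \<le> ts!Suc i"
        have m1: "L1*(b-a) \<le> max L1 L2*(b-a)" if "a \<le> b" for a b :: real
          using that by (intro mult_right_mono) auto
        have m2: "L2*(b-a) \<le> max L1 L2*(b-a)" if "a \<le> b" for a b :: real
          using that by (intro mult_right_mono) auto
        consider "t \<le> ts!i" | "ts!i \<le> s" | "s < ts!i \<and> ts!i < t" by linarith
        then show "\<bar>\<pi> t - \<pi> s\<bar> \<le> max L1 L2 * (t-s)"
        proof cases
          case 1 then show ?thesis using L1(2) st m1[of s t] by fastforce
        next
          case 2 then show ?thesis using L2(2) st m2[of s t] by fastforce
        next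
          case 3
          let ?m = "ts!i"
          have a: "\<bar>\<pi> ?m - \<pi> s\<bar> \<le> L1*(?m - s)" using L1(2) st 3 by auto
          have b: "\<bar>\<pi> t - \<pi> ?m\<bar> \<le> L2*(t - ?m)" using L2(2) st 3 by auto
          have "max L1 L2 * (t-s) = max L1 L2 * (t - ?m) + max L1 L2 * (?m - s)"
            by (simp add: algebra_simps)
          then show ?thesis using a b m1[of s ?m] m2[of ?m t] 3 by linarith
        qed
      qed
    qed
  qed
  have "length ts - 1 < length ts" using ne by simp
  moreover have "ts!(length ts - 1) = T" using lst last_conv_nth[OF ne] by simp
  ultimately show ?thesis using main[of "length ts - 1"] by simp
qed

theorem proposition5p4:
  fixes T :: real and \<pi> :: "real \<Rightarrow> real"
  assumes "T > 0"
    and "continuous_on {0..T} \<pi>"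
    and "piecewise_C1_on 0 T \<pi>"
    and "\<pi> 0 = 0"
  shows "\<exists>n::nat. \<forall>t\<in>{0..T}. P_iter n (\<lambda>t. (t, \<pi> t)) t \<in> C_aff"
proof -
  obtain ts where ts: "length ts \<ge> 2" "sorted_wrt (<) ts" "hd ts = 0" "last ts = T"
    and pieces: "\<forall>i. Suc i < length ts \<longrightarrow>
           (\<exists>f'. continuous_on {ts ! i .. ts ! Suc i} f' \<and>
                 (\<forall>x\<in>{ts ! i .. ts ! Suc i}.
                    (\<pi> has_real_derivative f' x) (at x within {ts ! i .. ts ! Suc i})))"
    using assms(3) unfolding piecewise_C1_on_def by blast
  obtain L where L: "L \<ge> 0" "\<forall>s t. 0 \<le> s \<longrightarrow> s \<le> t \<longrightarrow> t \<le> T \<longrightarrow> \<bar>\<pi> t - \<pi> s\<bar> \<le> L*(t-s)"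
    using lip_global[OF ts pieces] by blast
  define A where "A = L + 1"
  have A0: "0 < A" using L by (simp add: A_def)
  have slT: "slopes T (-A) (1+A) \<pi>"
    unfolding slopes_def
  proof (intro allI impI)
    fix s t assume st: "0 \<le> s" "s \<le> t" "t \<le> T"
    have "\<bar>\<pi> t - \<pi> s\<bar> \<le> L*(t-s)" using L st by auto
    then have b: "-(L*(t-s)) \<le> \<pi> t - \<pi> s" "\<pi> t - \<pi> s \<le> L*(t-s)" by (auto simp: abs_le_iff)
    have "L*(t-s) \<le> A*(t-s)" "A*(t-s) \<le> (1+A)*(t-s)" using st by (auto simp: A_def intro!: mult_right_mono)
    moreover have "(-A)*(t-s) = -(A*(t-s))" by simp
    ultimately show "-A*(t-s) \<le> \<pi> t - \<pi> s \<and> \<pi> t - \<pi> s \<le> (1+A)*(t-s)" using b by linarith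
  qed
  have ne: "ts \<noteq> []" using ts(1) by auto
  have h0: "ts!0 = 0" using ts(3) hd_conv_nth[OF ne] by simp
  define t1 where "t1 = ts ! Suc 0"
  have t1: "0 < t1" using sorted_wrt_nth_less[OF ts(2), of 0 "Suc 0"] ts(1) h0 unfolding t1_def by auto
  obtain f' where f': "continuous_on {0..t1} f'"
      "\<forall>x\<in>{0..t1}. (\<pi> has_real_derivative f' x) (at x within {0..t1})"
  proof -
    have "Suc 0 < length ts" using ts(1) by simp
    then have "\<exists>f'. continuous_on {ts ! 0 .. ts ! Suc 0} f' \<and>
                 (\<forall>x\<in>{ts ! 0 .. ts ! Suc 0}.
                    (\<pi> has_real_derivative f' x) (at x within {ts ! 0 .. ts ! Suc 0}))"
      using pieces by blast
    then show ?thesis using that unfolding t1_def h0 by blast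
  qed
  have "0 \<in> {0..t1}" using t1 by simp
  then have "\<forall>e>0. \<exists>d>0. \<forall>x'\<in>{0..t1}. dist x' 0 < d \<longrightarrow> dist (f' x') (f' 0) < e"
    using f'(1) unfolding continuous_on_iff by blast
  then have "\<exists>d>0. \<forall>x'\<in>{0..t1}. dist x' 0 < d \<longrightarrow> dist (f' x') (f' 0) < 1/4"
    by (meson zero_less_divide_1_iff zero_less_numeral)
  then obtain d where d: "d > 0" "\<forall>x'\<in>{0..t1}. dist x' 0 < d \<longrightarrow> dist (f' x') (f' 0) < 1/4"
    by blast
  define \<delta> where "\<delta> = min (d/2) t1"
  have \<delta>0: "0 < \<delta>" using d t1 by (simp add: \<delta>_def)
  define a where "a = f' 0"
  have slc: "slopes \<delta> (a-1/4) (a+1/4) \<pi>"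
    unfolding slopes_def
  proof (intro allI impI)
    fix s t assume st: "0 \<le> s" "s \<le> t" "t \<le> \<delta>"
    have "t \<le> t1" using st by (simp add: \<delta>_def)
    then obtain z where z: "z \<in> {s..t}" "\<pi> t - \<pi> s = f' z * (t - s)"
      using mvt_piece[of 0 s t t1 \<pi> f'] st f'(2) by blast
    have "z < d" using z st d by (simp add: \<delta>_def)
    then have "dist (f' z) (f' 0) < 1/4" using d z st \<open>t \<le> t1\<close> by (auto simp: dist_real_def)
    then have "\<bar>f' z - a\<bar> < 1/4" by (simp add: dist_real_def a_def)
    moreover have "f' z - a \<le> \<bar>f' z - a\<bar>" "-(f' z - a) \<le> \<bar>f' z - a\<bar>" by simp_all
    ultimately have fz: "a - 1/4 \<le> f' z" "f' z \<le> a + 1/4" by linarith+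
    have "(a-1/4)*(t-s) \<le> f' z * (t-s)" using fz st by (intro mult_right_mono) auto
    moreover have "f' z * (t-s) \<le> (a+1/4)*(t-s)" using fz st by (intro mult_right_mono) auto
    ultimately show "(a-1/4)*(t-s) \<le> \<pi> t - \<pi> s \<and> \<pi> t - \<pi> s \<le> (a+1/4)*(t-s)" using z by simp
  qed
  obtain n0 where "dd a < real n0" using reals_Archimedean2 by blast
  moreover have "real (4*n0) / 4 = real n0" by simp
  ultimately have dn: "dd a \<le> real (4*n0) / 4" by linarith
  obtain j0 where j0: "good (R 0 j0 \<pi>) \<delta>" using corner_main[OF dn slc assms(4), where k=0] by blast
  define c where "c = 1 + 1/(3*A)"
  have c1: "1 < c" using A0 by (simp add: c_def)
  have grow: "\<exists>j\<ge>1. good (R 0 j \<pi>) (min T (\<delta> * c^m))" for m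
  proof (induction m)
    case 0
    have "good (Q (0 + j0) (R 0 j0 \<pi>)) \<delta>" by (rule good_Q[OF j0 R_zero[of \<pi>, OF assms(4)]])
    then have "good (R 0 (Suc j0) \<pi>) \<delta>" by (simp only: R_Suc)
    then have "good (R 0 (Suc j0) \<pi>) (min T (\<delta> * c^0))" by (rule good_mono) simp
    then show ?case by (intro exI[of _ "Suc j0"]) simp
  next
    case (Suc m)
    then obtain j where j: "j \<ge> 1" "good (R 0 j \<pi>) (min T (\<delta> * c^m))" by blast
    define y where "y = R 0 j \<pi>"
    have syj: "slopes T (-A) (1+A) (R 0 (j-1) \<pi>)" by (rule R_slopes[OF slT assms(4)]) (use A0 in simp)
    have z1: "R 0 (j-1) \<pi> 0 = 0" by (rule R_zero[of \<pi>, OF assms(4)])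
    have yeq: "y = Q (j-1) (R 0 (j-1) \<pi>)" using R_Suc[of 0 "j-1" \<pi>] j(1) unfolding y_def by simp
    have par: "(odd j \<longrightarrow> (\<forall>t. 0 \<le> t \<longrightarrow> t \<le> T \<longrightarrow> y t \<le> t)) \<and> (even j \<longrightarrow> (\<forall>t. 0 \<le> t \<longrightarrow> t \<le> T \<longrightarrow> 0 \<le> y t))"
    proof -
      have "(odd (j-1) \<longrightarrow> 0 \<le> y t) \<and> (even (j-1) \<longrightarrow> y t \<le> t)" if "0 \<le> t" "t \<le> T" for t
        unfolding yeq by (rule Q_bounds[OF syj z1 that])
      moreover obtain i where ij: "j = Suc i" using j(1) by (cases j) auto
      ultimately show ?thesis by auto
    qed
    have sy: "slopes T (-A) (1+A) y" unfolding y_def by (rule R_slopes[OF slT assms(4)]) (use A0 in simp)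
    have y0: "y 0 = 0" unfolding y_def by (rule R_zero[of \<pi>, OF assms(4)])
    have tau: "0 \<le> \<delta> * c^m" using \<delta>0 c1 by simp
    have "good (Q j y) (min T (\<delta> * c^m * (1 + 1/(3*A))))"
      by (rule grow_Q[OF A0 sy y0 par _ tau]) (use j(2) y_def in simp)
    then have "good (Q j y) (min T (\<delta> * c^m * c))" by (simp only: c_def[symmetric])
    moreover have "R 0 (Suc j) \<pi> = Q j y" using R_Suc[of 0 j \<pi>] unfolding y_def by simp
    moreover have "\<delta> * c^m * c = \<delta> * c^Suc m" by (simp only: power_Suc2 mult.assoc)
    ultimately have "good (R 0 (Suc j) \<pi>) (min T (\<delta> * c^Suc m))" by simp
    then show ?case by (intro exI[of _ "Suc j"]) simp
  qed
  obtain m where "T/\<delta> < c^m" using real_arch_pow[OF c1] by blast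
  then have "T < c^m * \<delta>" using \<delta>0 pos_divide_less_eq by blast
  then have "T < \<delta> * c^m" by (metis mult.commute)
  then have mT: "min T (\<delta> * c^m) = T" by simp
  obtain j where j: "j \<ge> 1" "good (R 0 j \<pi>) T" using grow[of m] mT by auto
  have "\<forall>t\<in>{0..T}. P_iter (j-1) (\<lambda>t. (t, \<pi> t)) t \<in> C_aff"
  proof
    fix t :: real assume t: "t \<in> {0..T}"
    have "Suc (j-1) = j" using j(1) by simp
    then have "P_iter (j-1) (\<lambda>t. (t, \<pi> t)) t = (t, R 0 j \<pi> t)" by (simp add: P_iter_eq)
    then show "P_iter (j-1) (\<lambda>t. (t, \<pi> t)) t \<in> C_aff" using j(2) t by (auto simp: good_def C_aff_def)
  qed
  then show ?thesis by blast
qed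

end
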